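(* Let $S\subset\mathbb{R}^d$ be a nonempty compact convex set with diameter $D:=\sup_{x,y\in S}\|x-y\|$, and let $f$ be differentiable on $S$ with $L$-Lipschitz gradient on $S$ (not necessarily convex). Let $G:=\sup_{x\in S}\|\nabla f(x)\|<\infty$, fix $C\ge\max\{LD^2,\,GD\}$ with $C>0$, and let $f^*:=\inf_{x\in S}f(x)$. Let $\delta\ge0$ and suppose that for every $x\in S$ a vector $g_\delta(x)\in\mathbb{R}^d$ is available with \[ \big|\langle \nabla f(x)-g_\delta(x),\,s-x\rangle\big|\le\delta\,\|\nabla f(x)\|\quad\text{for all } s\in S. \] Let $\mathcal G(x):=\max_{s\in S}\langle\nabla f(x),\,x-s\rangle$ and $\tilde{\mathcal G}(x):=\max_{s\in S}\langle g_\delta(x),\,x-s\rangle$. Given $x^0\in S$, define iterates for $k=0,1,2,\dots$ by choosing $s^k\in\arg\min_{s\in S}\langle g_\delta(x^k),\,s-x^k\rangle$, setting $\overline\alpha_k:=\big(\tilde{\mathcal G}(x^k)-\delta\|\nabla f(x^k)\|\big)_+/C$ with $(u)_+:=\max\{u,0\}$, and $x^{k+1}:=x^k+\overline\alpha_k(s^k-x^k)$. Suppose there exists $r>0$ such that $\mathrm{dist}(x^k,\partial S)\ge r$ for all $k$. Then $\mathcal G(x^k)\ge r\|\nabla f(x^k)\|$ for all $k$, and if additionally $\delta<r/2$, then for every $K\ge0$, \[ \min_{0\le k\le K}\mathcal G(x^k)\le\frac{1}{1-\frac{2\delta}{r}}\sqrt{\frac{2C\,(f(x^0)-f^* )}{K+1}}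 ; \] consequently $\min_{0\le k\le K}\mathcal G(x^k)=\mathcal O(1/\sqrt K)$ and $\liminf_{k\to\infty}\mathcal G(x^k)=0$.
   Context: $\|\cdot\|$ is the Euclidean norm, $\langle\cdot,\cdot\rangle$ the Euclidean inner product, $\partial S$ is the boundary of $S$ in $\mathbb{R}^d$ and $\mathrm{dist}$ the Euclidean distance. *)

theory Defs
  imports "HOL-Analysis.Analysis" "HOL-Library.Landau_Symbols"
begin

definition fw_gap :: "'a::euclidean_space set \<Rightarrow> 'a \<Rightarrow> 'a \<Rightarrow> real" where
  "fw_gap S v x = (SUP s\<in>S. v \<bullet> (x - s))"

end

theory Submission imports Defs begin

lemma descent:
  fixes S :: "'a::euclidean_space set" and f :: "'a \<Rightarrow> real" and grad :: "'a \<Rightarrow> 'a"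
  assumes cv: "convex S"
    and diff: "\<And>y. y \<in> S \<Longrightarrow> (f has_derivative (\<lambda>h. grad y \<bullet> h)) (at y within S)"
    and lip: "\<And>y z. y \<in> S \<Longrightarrow> z \<in> S \<Longrightarrow> norm (grad y - grad z) \<le> L * norm (y - z)"
    and xS: "x \<in> S" and yS: "y \<in> S"
  shows "f y \<le> f x + grad x \<bullet> (y - x) + L / 2 * (norm (y - x))\<^sup>2"
proof -
  define d where "d = y - x"
  define z where "z = (\<lambda>t::real. x + t *\<^sub>R d)"
  have zS: "z t \<in> S" if "0 \<le> t" "t \<le> 1" for t
  proof -
    have "z t = (1 - t) *\<^sub>R x + t *\<^sub>R y" by (simp add: z_def d_def algebra_simps)
    thus ?thesis using convexD[OF cv xS yS, of "1-t" t] that by simp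
  qed
  define \<psi> where "\<psi> = (\<lambda>t. f (z t) - t * (grad x \<bullet> d) - L / 2 * t\<^sup>2 * (norm d)\<^sup>2)"
  define \<psi>' where "\<psi>' = (\<lambda>t h. h * (grad (z t) \<bullet> d) - h * (grad x \<bullet> d) - h * (L * t * (norm d)\<^sup>2))"
  have der: "(\<psi> has_derivative \<psi>' t) (at t within {0..1})" if "0 \<le> t" "t \<le> 1" for t
  proof -
    have zd: "(z has_derivative (\<lambda>h. h *\<^sub>R d)) (at t within {0..1})"
      unfolding z_def by (auto intro!: derivative_eq_intros)
    have fz: "((\<lambda>t. f (z t)) has_derivative (\<lambda>h. grad (z t) \<bullet> (h *\<^sub>R d))) (at t within {0..1})"
      by (rule has_derivative_in_compose2[OF diff _ _ zd]) (use zS that in auto)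
    show ?thesis unfolding \<psi>_def \<psi>'_def
      using fz by (auto intro!: derivative_eq_intros simp: algebra_simps power2_eq_square)
  qed
  obtain t where t: "t \<in> {0<..<1}" "\<psi> 1 - \<psi> 0 = \<psi>' t (1 - 0)"
    using mvt_simple[of 0 1 \<psi> \<psi>'] der by auto
  have "\<psi>' t 1 = (grad (z t) - grad x) \<bullet> d - L * t * (norm d)\<^sup>2"
    by (simp add: \<psi>'_def inner_diff_left)
  also have "(grad (z t) - grad x) \<bullet> d \<le> norm (grad (z t) - grad x) * norm d"
    by (rule norm_cauchy_schwarz)
  also have "norm (grad (z t) - grad x) \<le> L * norm (z t - x)"
    using lip[OF zS xS] t by auto
  also have "norm (z t - x) = t * norm d" using t by (simp add: z_def)
  finally have "\<psi>' t 1 \<le> 0" by (simp add: power2_eq_square mult_right_mono)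
  hence "\<psi> 1 \<le> \<psi> 0" using t by simp
  thus ?thesis by (simp add: \<psi>_def z_def d_def)
qed
theorem corollary1:
  fixes S :: "'a::euclidean_space set"
    and f :: "'a \<Rightarrow> real" and grad :: "'a \<Rightarrow> 'a" and g :: "'a \<Rightarrow> 'a"
    and L C \<delta> r :: real and x s :: "nat \<Rightarrow> 'a"
  assumes S: "S \<noteq> {}" "compact S" "convex S"
    and diff: "\<And>y. y \<in> S \<Longrightarrow> (f has_derivative (\<lambda>h. grad y \<bullet> h)) (at y within S)"
    and lip: "\<And>y z. y \<in> S \<Longrightarrow> z \<in> S \<Longrightarrow> norm (grad y - grad z) \<le> L * norm (y - z)"
    and Gfin: "bounded (grad ` S)"
    and C: "C \<ge> max (L * (diameter S)\<^sup>2) ((SUP y\<in>S. norm (grad y)) * diameter S)" "C > 0"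
    and \<delta>: "\<delta> \<ge> 0"
    and inexact: "\<And>y z. y \<in> S \<Longrightarrow> z \<in> S \<Longrightarrow>
                    \<bar>(grad y - g y) \<bullet> (z - y)\<bar> \<le> \<delta> * norm (grad y)"
    and x0: "x 0 \<in> S"
    and sk: "\<And>k. s k \<in> S \<and> (\<forall>z\<in>S. g (x k) \<bullet> (s k - x k) \<le> g (x k) \<bullet> (z - x k))"
    and step: "\<And>k. x (Suc k) = x k +
        (max (fw_gap S (g (x k)) (x k) - \<delta> * norm (grad (x k))) 0 / C) *\<^sub>R (s k - x k)"
    and r: "r > 0" "\<And>k. infdist (x k) (frontier S) \<ge> r"
  shows "(\<forall>k. fw_gap S (grad (x k)) (x k) \<ge> r * norm (grad (x k))) \<and>
         (\<delta> < r / 2 \<longrightarrow>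
            (\<forall>K::nat. Min ((\<lambda>k. fw_gap S (grad (x k)) (x k)) ` {0..K})
                \<le> 1 / (1 - 2 * \<delta> / r) * sqrt (2 * C * (f (x 0) - (INF y\<in>S. f y)) / (real K + 1)))
          \<and> (\<lambda>K::nat. Min ((\<lambda>k. fw_gap S (grad (x k)) (x k)) ` {0..K})) \<in> O(\<lambda>K. 1 / sqrt (real K))
          \<and> liminf (\<lambda>k. ereal (fw_gap S (grad (x k)) (x k))) = 0)"
proof -
  have bS: "bounded S" using S compact_imp_bounded by auto
  obtain B where B: "\<And>y. y \<in> S \<Longrightarrow> norm (grad y) \<le> B"
    using Gfin by (auto simp: bounded_iff)
  define Gs where "Gs = (SUP y\<in>S. norm (grad y))"
  have nG: "norm (grad y) \<le> Gs" if "y \<in> S" for y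
    unfolding Gs_def by (rule cSUP_upper[OF that]) (use B in \<open>auto intro!: bdd_aboveI2\<close>)
  have dS: "norm (y - z) \<le> diameter S" if "y \<in> S" "z \<in> S" for y z
    using diameter_bounded_bound[OF bS that] by (simp add: dist_norm)
  have diam0: "0 \<le> diameter S" using dS S(1) by (meson all_not_in_conv norm_ge_zero order_trans)
  have Gs0: "0 \<le> Gs" using nG S(1) by (meson all_not_in_conv norm_ge_zero order_trans)
  have CS: "Gs * diameter S \<le> C" "L * (diameter S)\<^sup>2 \<le> C" using C(1) by (auto simp: Gs_def)
  define a where "a = (\<lambda>k. g (x k) \<bullet> (x k - s k) - \<delta> * norm (grad (x k)))"
  define gap where "gap = (\<lambda>k. fw_gap S (grad (x k)) (x k))"
  have sS: "s k \<in> S" for k using sk by auto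
  have gapg: "fw_gap S (g (x k)) (x k) = g (x k) \<bullet> (x k - s k)" for k
  proof -
    have le: "g (x k) \<bullet> (x k - z) \<le> g (x k) \<bullet> (x k - s k)" if "z \<in> S" for z
      using sk[of k] that by (auto simp: inner_diff_right)
    show ?thesis unfolding fw_gap_def
      by (rule antisym, rule cSUP_least[OF S(1)], erule le,
          rule cSUP_upper[OF sS], rule bdd_aboveI2, erule le)
  qed
  have a_up: "a k \<le> grad (x k) \<bullet> (x k - s k)" if "x k \<in> S" for k
  proof -
    have "\<bar>(grad (x k) - g (x k)) \<bullet> (s k - x k)\<bar> \<le> \<delta> * norm (grad (x k))"
      using inexact[OF that sS] .
    thus ?thesis unfolding a_def by (auto simp: inner_diff_left inner_diff_right algebra_simps)
  qed
  have aC: "a k \<le> C" if "x k \<in> S" for k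
  proof -
    have "grad (x k) \<bullet> (x k - s k) \<le> norm (grad (x k)) * norm (x k - s k)"
      by (rule norm_cauchy_schwarz)
    also have "\<dots> \<le> Gs * diameter S"
      by (rule mult_mono) (use nG[OF that] dS[OF that sS] Gs0 in auto)
    finally show ?thesis using a_up[OF that] CS by linarith
  qed
  have xS: "x k \<in> S" for k
  proof (induction k)
    case 0 thus ?case using x0 .
  next
    case (Suc k)
    define \<alpha> where "\<alpha> = max (a k) 0 / C"
    have \<alpha>: "0 \<le> \<alpha>" "\<alpha> \<le> 1" using aC[OF Suc] C(2) by (auto simp: \<alpha>_def)
    have "x (Suc k) = (1 - \<alpha>) *\<^sub>R x k + \<alpha> *\<^sub>R s k"
      using step[of k] by (simp add: \<alpha>_def a_def gapg algebra_simps)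
    thus ?case using convexD[OF S(3) Suc sS, of "1-\<alpha>" \<alpha>] \<alpha> by simp
  qed
  have bdd: "bdd_above ((\<lambda>z. grad (x k) \<bullet> (x k - z)) ` S)" for k
  proof (rule bdd_aboveI2)
    fix z assume "z \<in> S"
    have "grad (x k) \<bullet> (x k - z) \<le> norm (grad (x k)) * norm (x k - z)"
      by (rule norm_cauchy_schwarz)
    also have "\<dots> \<le> norm (grad (x k)) * diameter S"
      by (rule mult_left_mono) (use dS[OF xS \<open>z \<in> S\<close>] in auto)
    finally show "grad (x k) \<bullet> (x k - z) \<le> norm (grad (x k)) * diameter S" .
  qed
  have gap_lb: "grad (x k) \<bullet> (x k - z) \<le> gap k" if "z \<in> S" for k z
    unfolding gap_def fw_gap_def by (rule cSUP_upper[OF that bdd])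
  have gap0: "0 \<le> gap k" for k using gap_lb[OF xS, of k k] by simp
  have ballS: "cball (x k) r \<subseteq> S" for k
  proof -
    have "ball (x k) r \<subseteq> S"
    proof (rule ccontr)
      assume "\<not> ball (x k) r \<subseteq> S"
      hence "ball (x k) r - S \<noteq> {}" by auto
      moreover have "ball (x k) r \<inter> S \<noteq> {}" using xS[of k] r(1) centre_in_ball by blast
      ultimately have "ball (x k) r \<inter> frontier S \<noteq> {}"
        using connected_Int_frontier[OF connected_ball] by blast
      then obtain p where p: "p \<in> ball (x k) r" "p \<in> frontier S" by auto
      have "infdist (x k) (frontier S) \<le> dist (x k) p" by (rule infdist_le[OF p(2)])
      thus False using p(1) r(2)[of k] by simp
    qed
    hence "closure (ball (x k) r) \<subseteq> S"
      using S(2) compact_imp_closed closure_minimal by blast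
    thus ?thesis using r(1) by simp
  qed
  have part1: "gap k \<ge> r * norm (grad (x k))" for k
  proof (cases "grad (x k) = 0")
    case True thus ?thesis using gap0[of k] by simp
  next
    case False
    define z where "z = x k - (r / norm (grad (x k))) *\<^sub>R grad (x k)"
    have "z \<in> cball (x k) r" using r(1) False by (simp add: z_def dist_norm)
    hence "z \<in> S" using ballS[of k] by blast
    have "grad (x k) \<bullet> (x k - z) = r * norm (grad (x k))"
      using False by (simp add: z_def power2_norm_eq_inner[symmetric] power2_eq_square)
    thus ?thesis using gap_lb[OF \<open>z \<in> S\<close>, of k] by simp
  qed
  have gap_up: "gap k \<le> a k + 2 * \<delta> * norm (grad (x k))" for k
    unfolding gap_def fw_gap_def
  proof (rule cSUP_least[OF S(1)])
    fix z assume zS: "z \<in> S"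
    have "\<bar>(grad (x k) - g (x k)) \<bullet> (z - x k)\<bar> \<le> \<delta> * norm (grad (x k))"
      using inexact[OF xS zS] .
    moreover have "g (x k) \<bullet> (s k - x k) \<le> g (x k) \<bullet> (z - x k)" using sk[of k] zS by auto
    ultimately show "grad (x k) \<bullet> (x k - z) \<le> a k + 2 * \<delta> * norm (grad (x k))"
      unfolding a_def by (auto simp: inner_diff_left inner_diff_right algebra_simps)
  qed
  have decr: "f (x (Suc k)) \<le> f (x k) - (max (a k) 0)\<^sup>2 / (2 * C)" for k
  proof -
    define \<alpha> where "\<alpha> = max (a k) 0 / C"
    define d where "d = s k - x k"
    have \<alpha>0: "0 \<le> \<alpha>" using C(2) by (simp add: \<alpha>_def)
    have xs: "x (Suc k) = x k + \<alpha> *\<^sub>R d"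
      using step[of k] by (simp add: \<alpha>_def a_def gapg d_def)
    have "f (x (Suc k)) \<le> f (x k) + grad (x k) \<bullet> (x (Suc k) - x k) + L / 2 * (norm (x (Suc k) - x k))\<^sup>2"
      by (rule descent[OF S(3) diff lip xS xS])
    also have "\<dots> = f (x k) + \<alpha> * (grad (x k) \<bullet> d) + \<alpha>\<^sup>2 / 2 * (L * (norm d)\<^sup>2)"
      using \<alpha>0 by (simp add: xs power_mult_distrib)
    also have "\<alpha> * (grad (x k) \<bullet> d) \<le> - \<alpha> * a k"
      proof -
      have "a k \<le> - (grad (x k) \<bullet> d)" using a_up[OF xS, of k] by (simp add: d_def inner_diff_right)
      hence "\<alpha> * a k \<le> \<alpha> * (- (grad (x k) \<bullet> d))" using \<alpha>0 by (rule mult_left_mono)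
      thus ?thesis by simp
    qed
    also have "L * (norm d)\<^sup>2 \<le> C"
    proof (cases "L \<ge> 0")
      case True
      have "(norm d)\<^sup>2 \<le> (diameter S)\<^sup>2"
        using dS[OF sS xS, of k] by (simp add: d_def power_mono)
      hence "L * (norm d)\<^sup>2 \<le> L * (diameter S)\<^sup>2" using True by (rule mult_left_mono)
      thus ?thesis using CS(2) by linarith
    next
      case False
      hence "L * (norm d)\<^sup>2 \<le> 0" by (simp add: mult_nonpos_nonneg)
      thus ?thesis using C(2) by linarith
    qed
    hence "\<alpha>\<^sup>2 / 2 * (L * (norm d)\<^sup>2) \<le> \<alpha>\<^sup>2 / 2 * C" by (simp add: mult_left_mono)
    finally have *: "f (x (Suc k)) \<le> f (x k) - \<alpha> * a k + \<alpha>\<^sup>2 / 2 * C" by simp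
    show ?thesis
    proof (cases "a k \<le> 0")
      case True thus ?thesis using * by (simp add: \<alpha>_def)
    next
      case False
      hence "- \<alpha> * a k + \<alpha>\<^sup>2 / 2 * C = - (max (a k) 0)\<^sup>2 / (2 * C)"
        using C(2) by (simp add: \<alpha>_def field_simps power2_eq_square)
      thus ?thesis using * by simp
    qed
  qed
  have fc: "continuous_on S f"
    using diff has_derivative_continuous continuous_on_eq_continuous_within by blast
  have "compact (f ` S)" using compact_continuous_image[OF fc S(2)] .
  hence bddf: "bdd_below (f ` S)" by (intro bounded_imp_bdd_below compact_imp_bounded)
  define fstar where "fstar = (INF y\<in>S. f y)"
  have fstar: "fstar \<le> f y" if "y \<in> S" for y
    unfolding fstar_def by (rule cINF_lower[OF bddf that])
  have part2: "(\<forall>K::nat. Min (gap ` {0..K})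
                \<le> 1 / (1 - 2 * \<delta> / r) * sqrt (2 * C * (f (x 0) - fstar) / (real K + 1)))
          \<and> (\<lambda>K::nat. Min (gap ` {0..K})) \<in> O(\<lambda>K. 1 / sqrt (real K))
          \<and> liminf (\<lambda>k. ereal (gap k)) = 0" if \<delta>r: "\<delta> < r / 2"
  proof -
    define c where "c = 1 - 2 * \<delta> / r"
    have c0: "0 < c" using \<delta>r r(1) by (simp add: c_def field_simps)
    define M where "M = 2 * C * (f (x 0) - fstar)"
    have alb: "c * gap k \<le> a k" for k
    proof -
      have "norm (grad (x k)) \<le> gap k / r" using part1[of k] r(1) by (simp add: pos_le_divide_eq mult.commute)
      hence "2 * \<delta> * norm (grad (x k)) \<le> 2 * \<delta> * (gap k / r)" using \<delta> by (intro mult_left_mono) auto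
      thus ?thesis using gap_up[of k] by (simp add: c_def algebra_simps)
    qed
    have sq: "(c * gap k)\<^sup>2 \<le> (max (a k) 0)\<^sup>2" for k
      by (rule power_mono) (use alb[of k] c0 gap0[of k] in auto)
    have dec2: "f (x (Suc k)) \<le> f (x k) - (c * gap k)\<^sup>2 / (2 * C)" for k
    proof -
      have "(c * gap k)\<^sup>2 / (2 * C) \<le> (max (a k) 0)\<^sup>2 / (2 * C)"
        using sq[of k] C(2) by (simp add: divide_right_mono)
      thus ?thesis using decr[of k] by linarith
    qed
    have tele: "(\<Sum>k<n. (c * gap k)\<^sup>2 / (2 * C)) \<le> f (x 0) - f (x n)" for n
    proof (induction n)
      case (Suc n) thus ?case using dec2[of n] by simp
    qed simp
    have sumM: "(\<Sum>k<n. (c * gap k)\<^sup>2) \<le> M" for n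
    proof -
      have "(\<Sum>k<n. (c * gap k)\<^sup>2) = 2 * C * (\<Sum>k<n. (c * gap k)\<^sup>2 / (2 * C))"
        using C(2) by (simp add: sum_distrib_left)
      also have "\<dots> \<le> 2 * C * (f (x 0) - f (x n))" using tele[of n] C(2) by simp
      also have "\<dots> \<le> M" unfolding M_def using fstar[OF xS[of n]] C(2) by simp
      finally show ?thesis .
    qed
    have M0: "0 \<le> M" using sumM[of 0] by simp
    have bnd: "Min (gap ` {0..K}) \<le> 1 / c * sqrt (M / (real K + 1))" for K
    proof -
      define m where "m = Min (gap ` {0..K})"
      have mle: "m \<le> gap k" if "k \<le> K" for k unfolding m_def using that by (intro Min_le) auto
      have "m \<in> gap ` {0..K}" unfolding m_def by (intro Min_in) auto
      hence m0: "0 \<le> m" using gap0 by auto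
      have "(\<Sum>k<Suc K. (c * m)\<^sup>2) \<le> (\<Sum>k<Suc K. (c * gap k)\<^sup>2)"
        by (rule sum_mono, rule power_mono) (use mle c0 m0 in auto)
      hence "(real K + 1) * (c * m)\<^sup>2 \<le> M" using sumM[of "Suc K"] by (simp add: add.commute)
      hence "(c * m)\<^sup>2 \<le> M / (real K + 1)" by (simp add: pos_le_divide_eq mult.commute)
      hence "c * m \<le> sqrt (M / (real K + 1))" by (rule real_le_rsqrt)
      thus ?thesis using c0 unfolding m_def[symmetric] by (simp add: field_simps)
    qed
    have bigo: "(\<lambda>K::nat. Min (gap ` {0..K})) \<in> O(\<lambda>K. 1 / sqrt (real K))"
    proof (rule bigoI[where c = "1 / c * sqrt M"])
      show "\<forall>\<^sub>F K in sequentially. norm (Min (gap ` {0..K})) \<le> 1 / c * sqrt M * norm (1 / sqrt (real K))"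
        using eventually_ge_at_top[of "1::nat"]
      proof eventually_elim
        case (elim K)
        have "Min (gap ` {0..K}) \<in> gap ` {0..K}" by (intro Min_in) auto
        hence m0: "0 \<le> Min (gap ` {0..K})" using gap0 by auto
        have "sqrt (M / (real K + 1)) = sqrt M / sqrt (real K + 1)" by (simp add: real_sqrt_divide)
        also have "\<dots> \<le> sqrt M / sqrt (real K)"
          using elim M0 by (intro divide_left_mono) auto
        finally have "1 / c * sqrt (M / (real K + 1)) \<le> 1 / c * (sqrt M / sqrt (real K))"
          using c0 by (intro mult_left_mono) auto
        thus ?case using bnd[of K] m0 by simp
      qed
    qed
    have summ: "summable (\<lambda>k. (c * gap k)\<^sup>2)"
      by (rule summableI_nonneg_bounded[OF _ sumM]) simp
    hence "(\<lambda>k. (c * gap k)\<^sup>2) \<longlonglongrightarrow> 0" by (rule summable_LIMSEQ_zero)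
    hence "(\<lambda>k. sqrt ((c * gap k)\<^sup>2) / c) \<longlonglongrightarrow> sqrt 0 / c"
      using c0 by (intro tendsto_intros) auto
    moreover have "sqrt ((c * gap k)\<^sup>2) / c = gap k" for k using c0 gap0[of k] by simp
    ultimately have "gap \<longlonglongrightarrow> 0" by simp
    hence "(\<lambda>k. ereal (gap k)) \<longlonglongrightarrow> ereal 0" by (rule tendsto_ereal)
    hence lim: "liminf (\<lambda>k. ereal (gap k)) = 0"
      using lim_imp_Liminf[OF trivial_limit_sequentially] zero_ereal_def by metis
    show ?thesis using bnd bigo lim by (simp add: c_def M_def)
  qed
  show ?thesis using part1 part2 unfolding gap_def fstar_def by blast
qed
end
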